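(* Let $G$ be a topological group admitting an unbounded lower semi-continuous invariant length function. Then $G$ fails topological bounded normal generation.
   Context: A lower semi-continuous invariant length function on $G$ is a map $l:G\to[0,+\infty]$ with $l(1_G)=0$, $l(g^{-1})=l(g)$, $l(gh)\le l(g)+l(h)$, $l(ghg^{-1})=l(h)$ for all $g,h\in G$, and such that $l^{-1}([0,r])$ is closed for every $r\ge0$. It is unbounded if for every $K\in\mathbb N$ there is $g\in G$ with $l(g)\in\,]K,+\infty[$. For $g\in G$, $g^{\pm G}=\{hgh^{-1}:h\in G\}\cup\{hg^{-1}h^{-1}:h\in G\}$; $A^{\cdot n}$ is the set of products of $n$ elements of $A$. $G$ has topological bounded normal generation if for every nontrivial $g\in G$ there is $n(g)\in\mathbb N$ with $\overline{(g^{\pm G})^{\cdot n(g)}}=G$. *)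

theory Defs
  imports "HOL-Analysis.Analysis"
begin

text \<open>A (not necessarily commutative) topological group is modelled by the type class
  topological_group_add, written additively: the identity is 0, the inverse of g is - g,
  and the group product g h is g + h.\<close>

definition lsc_invariant_length :: "('a::topological_group_add \<Rightarrow> ennreal) \<Rightarrow> bool" where
  "lsc_invariant_length l \<longleftrightarrow>
     l 0 = 0 \<and>
     (\<forall>g. l (- g) = l g) \<and>
     (\<forall>g h. l (g + h) \<le> l g + l h) \<and>
     (\<forall>g h. l (g + h + - g) = l h) \<and>
     (\<forall>r::real. r \<ge> 0 \<longrightarrow> closed {g. l g \<le> ennreal r})"

definition unbounded_length :: "('a \<Rightarrow> ennreal) \<Rightarrow> bool" where
  "unbounded_length l \<longleftrightarrow> (\<forall>K::nat. \<exists>g. of_nat K < l g \<and> l g < \<infinity>)"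

definition conj_pm :: "'a::group_add \<Rightarrow> 'a set" where
  "conj_pm g = {h + g + - h | h. True} \<union> {h + - g + - h | h. True}"

definition set_pow :: "'a::monoid_add set \<Rightarrow> nat \<Rightarrow> 'a set" where
  "set_pow A n = {sum_list xs | xs. length xs = n \<and> set xs \<subseteq> A}"

definition top_bounded_normal_generation :: "'a::topological_group_add itself \<Rightarrow> bool" where
  "top_bounded_normal_generation _ \<longleftrightarrow>
     (\<forall>g::'a. g \<noteq> 0 \<longrightarrow> (\<exists>n::nat. closure (set_pow (conj_pm g) n) = UNIV))"

end

theory Submission
  imports Defs
begin

lemma sum_list_bound:
  fixes l :: "'a::topological_group_add \<Rightarrow> ennreal"
  assumes L: "lsc_invariant_length l" and c: "\<forall>x\<in>set xs. l x \<le> c"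
  shows "l (sum_list xs) \<le> of_nat (length xs) * c"
  using c
proof (induction xs)
  case Nil
  then show ?case using L by (simp add: lsc_invariant_length_def)
next
  case (Cons x xs)
  have "l (sum_list (x # xs)) \<le> l x + l (sum_list xs)"
    using L by (simp add: lsc_invariant_length_def)
  also have "\<dots> \<le> c + of_nat (length xs) * c"
    using Cons by (intro add_mono) auto
  also have "\<dots> = of_nat (length (x # xs)) * c"
    by (simp add: distrib_right add.commute)
  finally show ?case .
qed

theorem mainTheorem6:
  assumes "\<exists>l :: 'a::topological_group_add \<Rightarrow> ennreal.
             lsc_invariant_length l \<and> unbounded_length l"
  shows "\<not> top_bounded_normal_generation TYPE('a)"
proof
  assume T: "top_bounded_normal_generation TYPE('a)"
  obtain l :: "'a \<Rightarrow> ennreal" where L: "lsc_invariant_length l" and U: "unbounded_length l"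
    using assms by blast
  obtain g where g: "0 < l g" "l g < \<infinity>" using U unfolding unbounded_length_def
    by (metis of_nat_0)
  have "g \<noteq> 0" using g L by (auto simp: lsc_invariant_length_def)
  then obtain n where n: "closure (set_pow (conj_pm g) n) = UNIV"
    using T unfolding top_bounded_normal_generation_def by blast
  have cj: "\<forall>x\<in>conj_pm g. l x \<le> l g"
  proof
    fix x assume "x \<in> conj_pm g"
    then obtain h where "x = h + g + - h \<or> x = h + - g + - h" unfolding conj_pm_def by blast
    then show "l x \<le> l g"
    proof
      assume "x = h + - g + - h"
      then have "l x = l (- g)" using L unfolding lsc_invariant_length_def by metis
      then show ?thesis using L unfolding lsc_invariant_length_def by simp
    qed (use L in \<open>simp add: lsc_invariant_length_def\<close>)
  qed
  define r where "r = enn2real (of_nat n * l g)"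
  have fin: "of_nat n * l g < \<infinity>" using g
    by (simp add: ennreal_mult_less_top of_nat_less_top)
  have rr: "ennreal r = of_nat n * l g" unfolding r_def using fin
    by (simp add: less_top)
  have cl: "closed {x. l x \<le> ennreal r}"
    using L unfolding lsc_invariant_length_def r_def by auto
  have "set_pow (conj_pm g) n \<subseteq> {x. l x \<le> ennreal r}"
    unfolding set_pow_def rr using sum_list_bound[OF L] cj by fastforce
  then have "closure (set_pow (conj_pm g) n) \<subseteq> {x. l x \<le> ennreal r}"
    using cl by (rule closure_minimal)
  then have all: "\<And>x. l x \<le> ennreal r" using n by auto
  obtain K :: nat where K: "r < real K" using reals_Archimedean2 by blast
  obtain x where x: "of_nat K < l x" using U unfolding unbounded_length_def by blast
  have "ennreal r < ennreal (real K)" using K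
    using enn2real_nonneg[of "of_nat n * l g"] unfolding r_def
    by (intro ennreal_lessI) (auto, metis enn2real_nonneg not_le of_nat_0 order.strict_trans1 less_irrefl neq0_conv)
  then have "ennreal r < of_nat K" by (simp add: ennreal_of_nat_eq_real_of_nat)
  then show False using all[of x] x by (meson leD order.strict_trans)
qed

end
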